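(* Let $n \ge 1$ and $r \ge 1$ be integers, $p \in (0,1)$, and let $X_1,\dots,X_r$ be i.i.d. with $X_i = \frac{1}{n}Y_i$, $Y_i \sim \mathrm{Bin}(n,p)$. Let $Z = \min_{1\le i\le r} X_i$. Fix $\delta \in (0,1)$ and define \[ \Delta(\delta,p,n) = \log_2\frac{2}{\delta} + 4\log_2(n+1) + \Big[\log_2\frac{p}{1-p}\Big]_+ . \] Assume $\Delta(\delta,p,n) < \log_2 r$. Then: (i) if $\mathsf{KL}(0\Vert p) \ge \frac{\log_2 r - \Delta(\delta,p,n)}{n}$, then with probability at least $1-\delta$, \[ Z < p \quad\text{and}\quad \frac{\log_2 r - \Delta(\delta,p,n)}{n} \le \mathsf{KL}(Z\Vert p) \le \frac{\log_2 r + \Delta(\delta,p,n)}{n}; \] (ii) if $\mathsf{KL}(0\Vert p) < \frac{\log_2 r - \Delta(\delta,p,n)}{n}$, then $\mathbb{P}(Z = 0) \ge 1-\delta$.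
   Context: All logarithms are base $2$ unless written $\ln$. For $\alpha \in [0,1]$ and $\beta \in (0,1)$, $\mathsf{KL}(\alpha\Vert\beta) = \alpha\log_2\frac{\alpha}{\beta} + (1-\alpha)\log_2\frac{1-\alpha}{1-\beta}$ denotes the KL divergence (in bits) between $\mathrm{Bernoulli}(\alpha)$ and $\mathrm{Bernoulli}(\beta)$, with the convention $0\log 0 = 0$ (so $\mathsf{KL}(0\Vert p) = \log_2\frac{1}{1-p}$). For real $x$, $[x]_+ = \max(x,0)$. *)

theory Defs
  imports "HOL-Probability.Probability"
begin

definition KL :: "real \<Rightarrow> real \<Rightarrow> real" where
  "KL a b = (if a = 0 then 0 else a * log 2 (a / b))
          + (if a = 1 then 0 else (1 - a) * log 2 ((1 - a) / (1 - b)))"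

definition Delta :: "real \<Rightarrow> real \<Rightarrow> nat \<Rightarrow> real" where
  "Delta \<delta> p n = log 2 (2 / \<delta>) + 4 * log 2 (real n + 1) + max (log 2 (p / (1 - p))) 0"

definition Ys :: "nat \<Rightarrow> real \<Rightarrow> nat \<Rightarrow> (nat \<Rightarrow> nat) pmf" where
  "Ys n p r = Pi_pmf {1..r} 0 (\<lambda>_. binomial_pmf n p)"

definition Zmin :: "nat \<Rightarrow> nat \<Rightarrow> (nat \<Rightarrow> nat) \<Rightarrow> real" where
  "Zmin n r Y = Min ((\<lambda>i. real (Y i) / real n) ` {1..r})"

end

theory Submission
  imports Defs
begin

definition tb :: "nat \<Rightarrow> real \<Rightarrow> nat \<Rightarrow> real" where
  "tb n q j = real (n choose j) * q^j * (1-q)^(n-j)"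

lemma choose_ratio: "j < n \<Longrightarrow> (Suc j) * (n choose Suc j) = (n - j) * (n choose j)"
  using binomial_absorb_comp binomial_absorption by presburger

lemma tb_sum: "(\<Sum>j\<le>n. tb n q j) = 1"
  using binomial_ring[of q "1-q" n] by (simp add: tb_def)

lemma tb_nonneg: "0 \<le> q \<Longrightarrow> q \<le> 1 \<Longrightarrow> 0 \<le> tb n q j"
  by (simp add: tb_def)

lemma tb_le1: assumes "0 \<le> q" "q \<le> 1" "j \<le> n" shows "tb n q j \<le> 1"
proof -
  have "tb n q j \<le> (\<Sum>j\<le>n. tb n q j)"
    by (rule member_le_sum) (use assms tb_nonneg in auto)
  then show ?thesis by (simp add: tb_sum)
qed

lemma tb_ratio:
  assumes "j < n"
  shows "(real j + 1) * (1-q) * tb n q (Suc j) = real (n-j) * q * tb n q j"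
proof -
  have c: "real (Suc j) * real (n choose Suc j) = real (n - j) * real (n choose j)"
    using choose_ratio[OF assms] by (metis of_nat_mult)
  have e1: "(1-q)^(n-j) = (1-q) * (1-q)^(n - Suc j)"
    using assms by (metis Suc_diff_Suc power_Suc)
  have "(real j + 1) * (1-q) * tb n q (Suc j) = (real (Suc j) * real (n choose Suc j)) * (q * q^j) * ((1-q) * (1-q)^(n - Suc j))"
    unfolding tb_def by (simp add: algebra_simps)
  also have "\<dots> = real (n - j) * q * tb n q j"
    unfolding c tb_def e1 by (simp add: algebra_simps)
  finally show ?thesis .
qed

lemma tb_up:
  assumes "0 \<le> q" "q \<le> 1" "j < n" "(real j + 1) * (1-q) \<le> real (n-j) * q"
  shows "tb n q j \<le> tb n q (Suc j)"
proof -
  have pos: "real (n-j) * q > 0"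
  proof (cases "q = 0")
    case True then show ?thesis using assms(4) by simp
  next
    case False then show ?thesis using assms by (simp add: mult_pos_pos)
  qed
  have "real (n-j) * q * tb n q j = (real j + 1) * (1-q) * tb n q (Suc j)"
    using tb_ratio[OF assms(3)] by simp
  also have "\<dots> \<le> real (n-j) * q * tb n q (Suc j)"
    by (rule mult_right_mono[OF assms(4) tb_nonneg[OF assms(1,2)]])
  finally show ?thesis using pos by (rule mult_left_le_imp_le)
qed

lemma tb_down:
  assumes "0 \<le> q" "q \<le> 1" "j < n" "real (n-j) * q \<le> (real j + 1) * (1-q)"
  shows "tb n q (Suc j) \<le> tb n q j"
proof -
  have pos: "(real j + 1) * (1-q) > 0"
  proof (rule ccontr)
    assume "\<not> ?thesis"
    then have "q = 1" using assms by (smt (verit) mult_pos_pos of_nat_0_le_iff)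
    then show False using assms by simp
  qed
  have "(real j + 1) * (1-q) * tb n q (Suc j) = real (n-j) * q * tb n q j"
    using tb_ratio[OF assms(3)] by simp
  also have "\<dots> \<le> (real j + 1) * (1-q) * tb n q j"
    by (rule mult_right_mono[OF assms(4) tb_nonneg[OF assms(1,2)]])
  finally show ?thesis using pos by (rule mult_left_le_imp_le)
qed

lemma tb_mode:
  assumes "0 \<le> q" "q \<le> 1" "m \<le> n"
    and up: "\<And>j. j < m \<Longrightarrow> (real j + 1) * (1-q) \<le> real (n-j) * q"
    and dn: "\<And>j. m \<le> j \<Longrightarrow> j < n \<Longrightarrow> real (n-j) * q \<le> (real j + 1) * (1-q)"
  shows "tb n q m \<ge> 1 / (real n + 1)"
proof -
  have A: "tb n q (m - d) \<le> tb n q m" for d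
  proof (induction d)
    case (Suc d)
    show ?case
    proof (cases "d < m")
      case True
      then have "m - Suc d < m" "Suc (m - Suc d) = m - d" by auto
      then have "tb n q (m - Suc d) \<le> tb n q (Suc (m - Suc d))"
        using tb_up[OF assms(1,2)] up assms(3) by (metis order_less_le_trans)
      then show ?thesis using Suc \<open>Suc (m - Suc d) = m - d\<close> by simp
    next
      case False then show ?thesis using Suc by simp
    qed
  qed simp
  have B: "m + d \<le> n \<Longrightarrow> tb n q (m + d) \<le> tb n q m" for d
  proof (induction d)
    case (Suc d)
    then have "m + d < n" by simp
    then have "tb n q (Suc (m + d)) \<le> tb n q (m + d)"
      using tb_down[OF assms(1,2)] dn[of "m+d"] by simp
    then show ?case using Suc by simp
  qed simp
  have all: "j \<le> n \<Longrightarrow> tb n q j \<le> tb n q m" for j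
  proof (cases "j \<le> m")
    case True then show ?thesis using A[of "m - j"] by simp
  next
    case False
    assume "j \<le> n"
    then show ?thesis using B[of "j - m"] False by simp
  qed
  have "1 = (\<Sum>j\<le>n. tb n q j)" by (simp add: tb_sum)
  also have "\<dots> \<le> (\<Sum>j\<le>n. tb n q m)" by (rule sum_mono) (simp add: all)
  also have "\<dots> = (real n + 1) * tb n q m" by simp
  finally show ?thesis by (simp add: field_simps)
qed

definition gg :: "nat \<Rightarrow> real \<Rightarrow> nat \<Rightarrow> real" where
  "gg n p k = (p / (real k / real n))^k * ((1-p) / (1 - real k / real n))^(n-k)"

lemma powr_log_pow: assumes "y > 0" shows "2 powr (real k * log 2 y) = y ^ k"
proof -
  have "2 powr (real k * log 2 y) = (2 powr (log 2 y)) powr real k"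
    by (simp add: powr_powr mult.commute)
  also have "\<dots> = y powr real k" using assms by simp
  also have "\<dots> = y ^ k" using assms by (simp add: powr_realpow)
  finally show ?thesis .
qed

lemma gg_KL:
  assumes "1 \<le> n" "k \<le> n" "0 < p" "p < 1"
  shows "2 powr (- real n * KL (real k / real n) p) = gg n p k"
proof -
  define a where "a = real k / real n"
  have na: "real n * a = real k" using assms by (simp add: a_def)
  have na1: "real n * (1 - a) = real (n - k)" using assms by (simp add: a_def field_simps of_nat_diff)
  have a0: "a = 0 \<longleftrightarrow> k = 0" using assms by (simp add: a_def)
  have a1: "a = 1 \<longleftrightarrow> k = n" using assms by (auto simp: a_def)
  have a01: "0 \<le> a" "a \<le> 1" using assms by (auto simp: a_def)
  have E: "real n * KL a p = real k * log 2 (a / p) + real (n-k) * log 2 ((1 - a) / (1 - p))"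
  proof -
    have "real n * KL a p = (if a = 0 then 0 else (real n * a) * log 2 (a / p))
          + (if a = 1 then 0 else (real n * (1 - a)) * log 2 ((1 - a) / (1 - p)))"
      unfolding KL_def by (simp add: algebra_simps)
    also have "\<dots> = real k * log 2 (a / p) + real (n-k) * log 2 ((1 - a) / (1 - p))"
      unfolding na na1 using a0 a1 by auto
    finally show ?thesis .
  qed
  have T1: "2 powr (- (real k * log 2 (a / p))) = (p / a)^k"
  proof (cases "k = 0")
    case True then show ?thesis by simp
  next
    case False
    then have "a > 0" using a0 a01 by auto
    then have "- (real k * log 2 (a / p)) = real k * log 2 (p / a)"
      using assms by (simp add: log_divide algebra_simps)
    then show ?thesis using powr_log_pow[of "p/a" k] \<open>a > 0\<close> assms by simp
  qed
  have T2: "2 powr (- (real (n-k) * log 2 ((1-a) / (1-p)))) = ((1-p) / (1-a))^(n-k)"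
  proof (cases "k = n")
    case True then show ?thesis by simp
  next
    case False
    then have "a < 1" using a1 a01 by auto
    then have "- (real (n-k) * log 2 ((1-a) / (1-p))) = real (n-k) * log 2 ((1-p) / (1-a))"
      using assms by (simp add: log_divide algebra_simps)
    then show ?thesis using powr_log_pow[of "(1-p)/(1-a)" "n-k"] \<open>a < 1\<close> assms by simp
  qed
  have "2 powr (- real n * KL a p) = 2 powr (- (real k * log 2 (a / p))) * 2 powr (- (real (n-k) * log 2 ((1-a) / (1-p))))"
    using E by (simp add: powr_add[symmetric])
  also have "\<dots> = gg n p k" unfolding T1 T2 by (simp add: gg_def a_def)
  finally show ?thesis by (simp add: a_def)
qed

lemma tb_gg:
  assumes "1 \<le> n" "k \<le> n"
  shows "tb n p k = gg n p k * tb n (real k / real n) k"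
proof -
  define a where "a = real k / real n"
  have a0: "a = 0 \<longleftrightarrow> k = 0" using assms by (simp add: a_def)
  have a1: "a = 1 \<longleftrightarrow> k = n" using assms by (auto simp: a_def)
  have F1: "(p / a)^k * a^k = p^k" using a0 by (cases "k = 0") (simp_all add: power_divide)
  have F2: "((1-p) / (1-a))^(n-k) * (1-a)^(n-k) = (1-p)^(n-k)"
    using a1 by (cases "k = n") (simp_all add: power_divide)
  have G: "gg n p k * tb n a k = real (n choose k) * ((p / a)^k * a^k) * (((1-p) / (1-a))^(n-k) * (1-a)^(n-k))"
    unfolding tb_def gg_def a_def by (simp add: algebra_simps)
  show ?thesis unfolding a_def[symmetric] G F1 F2 by (simp add: tb_def)
qed

lemma pmf_bin_tb: "0 \<le> p \<Longrightarrow> p \<le> 1 \<Longrightarrow> pmf (binomial_pmf n p) k = tb n p k"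
  unfolding tb_def by simp

lemma prob_all_gt:
  assumes "0 \<le> p" "p \<le> 1"
  shows "measure_pmf.prob (Ys n p r) {Y. \<forall>i\<in>{1..r}. k < Y i} \<le> exp (- real r * tb n p k)"
proof -
  let ?B = "binomial_pmf n p"
  have eq: "{Y. \<forall>i\<in>{1..r}. k < Y i} = Pi {1..r} (\<lambda>_. {k<..})" by (auto simp: Pi_def)
  have "measure_pmf.prob (Ys n p r) {Y. \<forall>i\<in>{1..r}. k < Y i} = (\<Prod>i\<in>{1..r}. measure_pmf.prob ?B {k<..})"
    unfolding eq Ys_def by (rule measure_Pi_pmf_Pi) simp
  also have "\<dots> = measure_pmf.prob ?B {k<..} ^ r" by simp
  also have "\<dots> \<le> (1 - tb n p k) ^ r"
  proof (rule power_mono)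
    have "measure_pmf.prob ?B {k<..} \<le> measure_pmf.prob ?B (space (measure_pmf ?B) - {k})"
      by (rule measure_pmf.finite_measure_mono) auto
    also have "\<dots> = 1 - tb n p k"
      by (subst measure_pmf.prob_compl) (auto simp: measure_pmf_single tb_def assms)
    finally show "measure_pmf.prob ?B {k<..} \<le> 1 - tb n p k" .
  qed simp
  also have "\<dots> \<le> exp (- tb n p k) ^ r"
  proof (rule power_mono)
    show "1 - tb n p k \<le> exp (- tb n p k)" using exp_ge_add_one_self[of "- tb n p k"] by simp
    have "tb n p k \<le> 1"
    proof (cases "k \<le> n")
      case True then show ?thesis using tb_le1 assms by blast
    next
      case False then show ?thesis by (simp add: tb_def binomial_eq_0)
    qed
    then show "0 \<le> 1 - tb n p k" by simp
  qed
  also have "\<dots> = exp (- real r * tb n p k)" by (simp add: exp_of_nat_mult[symmetric])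
  finally show ?thesis .
qed

lemma prob_ex_in:
  assumes "0 \<le> p" "p \<le> 1"
  shows "measure_pmf.prob (Ys n p r) {Y. \<exists>i\<in>{1..r}. Y i \<in> A} \<le> real r * measure_pmf.prob (binomial_pmf n p) A"
proof -
  have eq: "{Y. \<exists>i\<in>{1..r}. Y i \<in> A} = (\<Union>i\<in>{1..r}. {Y. Y i \<in> A})" by auto
  have "measure_pmf.prob (Ys n p r) {Y. \<exists>i\<in>{1..r}. Y i \<in> A} \<le> (\<Sum>i\<in>{1..r}. measure_pmf.prob (Ys n p r) {Y. Y i \<in> A})"
    unfolding eq by (rule measure_pmf.finite_measure_subadditive_finite) auto
  also have "\<dots> = (\<Sum>i\<in>{1..r}. measure_pmf.prob (binomial_pmf n p) A)"
  proof (rule sum.cong)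
    fix i assume i: "i \<in> {1..r}"
    have "measure_pmf.prob (Ys n p r) {Y. Y i \<in> A} = measure_pmf.prob (map_pmf (\<lambda>Y. Y i) (Ys n p r)) A"
      by (simp add: vimage_def)
    also have "map_pmf (\<lambda>Y. Y i) (Ys n p r) = binomial_pmf n p"
      unfolding Ys_def using i by (subst Pi_pmf_component) auto
    finally show "measure_pmf.prob (Ys n p r) {Y. Y i \<in> A} = measure_pmf.prob (binomial_pmf n p) A" .
  qed simp
  also have "\<dots> = real r * measure_pmf.prob (binomial_pmf n p) A" by simp
  finally show ?thesis .
qed

lemma prob_bin_sum:
  assumes "0 < p" "p < 1"
  shows "measure_pmf.prob (binomial_pmf n p) A = (\<Sum>k\<in>A \<inter> {..n}. tb n p k)"
proof -
  have "measure_pmf.prob (binomial_pmf n p) A = measure_pmf.prob (binomial_pmf n p) (A \<inter> {..n})"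
    using measure_Int_set_pmf[of "binomial_pmf n p" A] assms by simp
  also have "\<dots> = (\<Sum>k\<in>A \<inter> {..n}. tb n p k)"
    using assms by (subst measure_measure_pmf_finite) (auto simp: tb_def intro!: sum.cong)
  finally show ?thesis .
qed

lemma cond_up_iff: "j \<le> n \<Longrightarrow> ((real j + 1) * (1 - q) \<le> real (n - j) * q) = (real j + 1 \<le> (real n + 1) * q)"
  by (simp add: of_nat_diff algebra_simps)

lemma cond_dn_iff: "j \<le> n \<Longrightarrow> (real (n - j) * q \<le> (real j + 1) * (1 - q)) = ((real n + 1) * q \<le> real j + 1)"
  by (simp add: of_nat_diff algebra_simps)

lemma tb_mode_self:
  assumes "1 \<le> n" "m \<le> n"
  shows "tb n (real m / real n) m \<ge> 1 / (real n + 1)"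
proof (rule tb_mode)
  let ?q = "real m / real n"
  have e: "(real n + 1) * ?q = real m + real m / real n" using assms by (simp add: field_simps)
  have mn: "real m / real n \<le> 1" using assms by simp
  show "0 \<le> ?q" by simp
  show "?q \<le> 1" by (rule mn)
  show "m \<le> n" by (rule assms)
  fix j
  show "j < m \<Longrightarrow> (real j + 1) * (1 - ?q) \<le> real (n - j) * ?q"
  proof -
    assume j: "j < m"
    have "real j + 1 \<le> (real n + 1) * ?q" unfolding e using j by (simp add: add_increasing2)
    then show ?thesis using j assms by (subst cond_up_iff) auto
  qed
  show "m \<le> j \<Longrightarrow> j < n \<Longrightarrow> real (n - j) * ?q \<le> (real j + 1) * (1 - ?q)"
  proof -
    assume j: "m \<le> j" "j < n"
    have "(real n + 1) * ?q \<le> real j + 1" unfolding e using j mn by linarith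
    then show ?thesis using j by (subst cond_dn_iff) auto
  qed
qed

lemma compl_bound:
  assumes "UNIV - E \<subseteq> S"
  shows "measure_pmf.prob M E \<ge> 1 - measure_pmf.prob M S"
proof -
  have "measure_pmf.prob M (UNIV - E) \<le> measure_pmf.prob M S"
    by (rule measure_pmf.finite_measure_mono) (use assms in auto)
  moreover have "measure_pmf.prob M (UNIV - E) = 1 - measure_pmf.prob M E"
    using measure_pmf.prob_compl[of E M] by simp
  ultimately show ?thesis by simp
qed

lemma exp_bound: fixes d x :: real assumes "0 < d" "2 / d \<le> x" shows "exp (- x) \<le> d / 2"
proof -
  have "exp (-x) \<le> exp (- (2/d))" using assms by simp
  also have "exp (2/d) \<ge> 2/d" using exp_ge_add_one_self[of "2/d"] by linarith
  then have "exp (- (2/d)) \<le> d/2" using assms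
    by (simp add: exp_minus field_simps)
  finally show ?thesis .
qed

lemma Zmin_le: assumes "i \<in> {1..r}" shows "Zmin n r Y \<le> real (Y i) / real n"
  unfolding Zmin_def using assms by (intro Min_le) auto

lemma Zmin_attained: assumes "1 \<le> r" shows "\<exists>j\<in>{1..r}. Zmin n r Y = real (Y j) / real n"
proof -
  have "Zmin n r Y \<in> (\<lambda>i. real (Y i) / real n) ` {1..r}"
    unfolding Zmin_def using assms by (intro Min_in) auto
  then show ?thesis by auto
qed

lemma P_eq:
  assumes "1 \<le> n" "0 < p" "p < 1" "0 < \<delta>"
  shows "2 powr (Delta \<delta> p n) = (2 / \<delta>) * (real n + 1)^4 * max (p / (1-p)) 1"
proof -
  have a: "2 powr (log 2 (2 / \<delta>)) = 2 / \<delta>" using assms by simp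
  have b: "2 powr (4 * log 2 (real n + 1)) = (real n + 1)^4"
    using powr_log_pow[of "real n + 1" 4] by simp
  have c: "2 powr (max (log 2 (p / (1 - p))) 0) = max (p / (1-p)) 1"
  proof (cases "p / (1-p) \<ge> 1")
    case True
    then have "log 2 (p / (1 - p)) \<ge> 0" by simp
    then show ?thesis using True assms by (simp add: max_def)
  next
    case False
    then have "log 2 (p / (1 - p)) < 0" using assms by simp
    then show ?thesis using False assms by (simp add: max_def)
  qed
  show ?thesis unfolding Delta_def powr_add a b c ..
qed

theorem theorem1:
  fixes n r :: nat and p \<delta> :: real
  assumes "n \<ge> 1" and "r \<ge> 1" and "0 < p" and "p < 1"
    and "0 < \<delta>" and "\<delta> < 1"
    and "Delta \<delta> p n < log 2 (real r)"
  shows "(KL 0 p \<ge> (log 2 (real r) - Delta \<delta> p n) / real n \<longrightarrow>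
           measure_pmf.prob (Ys n p r)
             {Y. Zmin n r Y < p
                 \<and> (log 2 (real r) - Delta \<delta> p n) / real n \<le> KL (Zmin n r Y) p
                 \<and> KL (Zmin n r Y) p \<le> (log 2 (real r) + Delta \<delta> p n) / real n}
             \<ge> 1 - \<delta>)
       \<and> (KL 0 p < (log 2 (real r) - Delta \<delta> p n) / real n \<longrightarrow>
           measure_pmf.prob (Ys n p r) {Y. Zmin n r Y = 0} \<ge> 1 - \<delta>)"
proof -
  note n1 = assms(1) and r1 = assms(2) and p0 = assms(3) and p1 = assms(4)
    and d0 = assms(5) and d1 = assms(6) and DR = assms(7)
  define L where "L = (log 2 (real r) - Delta \<delta> p n) / real n"
  define U where "U = (log 2 (real r) + Delta \<delta> p n) / real n"
  define P where "P = 2 powr (Delta \<delta> p n)"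
  define M where "M = max (p / (1-p)) 1"
  have n0: "real n > 0" using n1 by simp
  have r0: "real r > 0" using r1 by simp
  have Peq: "P = (2 / \<delta>) * (real n + 1)^4 * M"
    unfolding P_def M_def by (rule P_eq[OF n1 p0 p1 d0])
  have M1: "M \<ge> 1" by (simp add: M_def)
  have P0: "P > 0" by (simp add: P_def)
  have L0: "L > 0" using DR n0 by (simp add: L_def)
  have PL: "2 powr (- real n * L) = P / real r"
  proof -
    have "- real n * L = Delta \<delta> p n - log 2 (real r)" using n0 by (simp add: L_def)
    then show ?thesis using r0 by (simp add: powr_diff P_def)
  qed
  have PU: "2 powr (- real n * U) = 1 / (real r * P)"
  proof -
    have e: "real r * P = 2 powr (log 2 (real r)) * 2 powr (Delta \<delta> p n)" using r0 by (simp add: P_def)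
    have "2 powr (- real n * U) * (real r * P) = 2 powr (- real n * U) * 2 powr (log 2 (real r)) * 2 powr (Delta \<delta> p n)"
      unfolding e by (simp only: mult.assoc)
    also have "\<dots> = 2 powr (- real n * U + log 2 (real r) + Delta \<delta> p n)"
      by (simp only: powr_add)
    also have "\<dots> = 1" using n0 by (simp add: U_def)
    finally show ?thesis using r0 P0 by (simp add: field_simps)
  qed
  have PLle: "P / real r \<le> 1"
  proof -
    have "2 powr (- real n * L) \<le> 2 powr 0" using L0 n0
      by (intro powr_mono) (auto simp: mult_pos_pos)
    then show ?thesis using PL by simp
  qed
  have KLcmp: "P / real r < 2 powr (- real n * KL x p)" if "KL x p < L" for x
    unfolding PL[symmetric] using that n0 by (intro powr_less_mono) auto
  have KLcmpU: "2 powr (- real n * KL x p) < 1 / (real r * P)" if "U < KL x p" for x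
    unfolding PU[symmetric] using that n0 by (intro powr_less_mono) auto
  have Mmin: "M * min 1 ((1-p) / (real n * p)) \<ge> 1 / real n"
  proof -
    define x where "x = (1-p) / (real n * p)"
    have x0: "x > 0" using p0 p1 n0 by (simp add: x_def)
    have inv: "1 / real n \<le> 1" using n1 by simp
    have Mx: "M * x \<ge> 1 / real n"
    proof (cases "p / (1-p) \<ge> 1")
      case True
      then have "M = p / (1-p)" by (simp add: M_def)
      moreover have "p / (1-p) * x = 1 / real n" using p0 p1 n0 by (simp add: field_simps x_def)
      ultimately show ?thesis by simp
    next
      case False
      then have "M = 1" by (simp add: M_def)
      moreover have "x \<ge> 1 / real n"
        using False p0 p1 n0 by (simp add: field_simps x_def)
      ultimately show ?thesis by simp
    qed
    show ?thesis
    proof (cases "x \<le> 1")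
      case True then show ?thesis using Mx by (simp add: x_def[symmetric] min_def)
    next
      case False then have "min 1 x = 1" by simp
      then show ?thesis using M1 inv by (simp add: x_def[symmetric])
    qed
  qed
  show ?thesis
    unfolding L_def[symmetric] U_def[symmetric]
  proof (intro conjI impI)
    assume h: "KL 0 p < L"
    have t0: "tb n p 0 = 2 powr (- real n * KL 0 p)"
      using gg_KL[OF n1 _ p0 p1, of 0] by (simp add: gg_def tb_def)
    have "P < real r * tb n p 0" using KLcmp[OF h] r0 unfolding t0 by (simp add: field_simps)
    moreover have "P \<ge> 2 / \<delta>"
    proof -
      have "(real n + 1)^4 * M \<ge> 1" using M1 by (simp add: one_le_power mult_ge1_I)
      then have "(2 / \<delta>) * 1 \<le> (2 / \<delta>) * ((real n + 1)^4 * M)"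
        using d0 by (intro mult_left_mono) auto
      then show ?thesis using Peq by (simp add: mult.assoc)
    qed
    ultimately have big: "2 / \<delta> \<le> real r * tb n p 0" by simp
    have "measure_pmf.prob (Ys n p r) {Y. Zmin n r Y = 0} \<ge> 1 - measure_pmf.prob (Ys n p r) {Y. \<forall>i\<in>{1..r}. 0 < Y i}"
    proof (rule compl_bound, rule subsetI)
      fix Y :: "nat \<Rightarrow> nat" assume "Y \<in> UNIV - {Y. Zmin n r Y = 0}"
      then have nz: "Zmin n r Y \<noteq> 0" by simp
      have "0 < Y i" if i: "i \<in> {1..r}" for i
      proof (rule ccontr)
      assume Y0: "\<not> 0 < Y i"
      have le: "Zmin n r Y \<le> 0" using Zmin_le[OF i, of n Y] Y0 by simp
      obtain j where "j \<in> {1..r}" "Zmin n r Y = real (Y j) / real n"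
        using Zmin_attained[OF r1] by blast
      then have "Zmin n r Y \<ge> 0" by simp
      with le nz show False by simp
      qed
      then show "Y \<in> {Y. \<forall>i\<in>{1..r}. 0 < Y i}" by simp
    qed
    moreover have "measure_pmf.prob (Ys n p r) {Y. \<forall>i\<in>{1..r}. 0 < Y i} \<le> \<delta> / 2"
      using prob_all_gt[of p n r 0] p0 p1 exp_bound[OF d0 big] by simp
    ultimately show "measure_pmf.prob (Ys n p r) {Y. Zmin n r Y = 0} \<ge> 1 - \<delta>" using d0 by simp
  next
    assume h: "L \<le> KL 0 p"
    define good where "good k \<longleftrightarrow> real k / real n < p \<and> L \<le> KL (real k / real n) p" for k :: nat
    define KS where "KS = {j. j \<le> n \<and> (\<forall>k\<le>j. good k)}"
    define ks where "ks = Max KS"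
    have g0: "good 0" using h p0 by (simp add: good_def)
    have KSfin: "finite KS" unfolding KS_def by simp
    have KS0: "0 \<in> KS" using g0 by (simp add: KS_def)
    have ksin: "ks \<in> KS" unfolding ks_def using KSfin KS0 by (intro Max_in) auto
    have ksmax: "j \<in> KS \<Longrightarrow> j \<le> ks" for j unfolding ks_def using KSfin by simp
    have Qks: "\<forall>k\<le>ks. good k" using ksin by (simp add: KS_def)
    have ksp: "real ks < real n * p" using Qks n0 by (auto simp: good_def field_simps)
    have ksn: "ks < n"
    proof -
      have "real n * p < real n" using p1 n0 by simp
      then show ?thesis using ksp by linarith
    qed
    have notgood: "\<not> good (Suc ks)"
    proof
      assume g: "good (Suc ks)"
      then have "\<forall>k\<le>Suc ks. good k" using Qks le_Suc_eq by auto
      then have "Suc ks \<in> KS" using ksn by (simp add: KS_def)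
      then show False using ksmax by fastforce
    qed
    have tbnn: "0 \<le> tb n p k" for k using p0 p1 by (simp add: tb_nonneg)
    have ratio: "(1-p) * tb n p (Suc ks) \<le> real n * p * tb n p ks"
    proof -
      have "(1-p) * tb n p (Suc ks) \<le> (real ks + 1) * ((1-p) * tb n p (Suc ks))"
        using mult_right_mono[of 1 "real ks + 1" "(1-p) * tb n p (Suc ks)"] p1 tbnn[of "Suc ks"] by simp
      also have "\<dots> = real (n - ks) * p * tb n p ks" using tb_ratio[OF ksn, of p] by (simp add: mult.assoc)
      also have "\<dots> \<le> real n * p * tb n p ks"
        using p0 tbnn[of ks] by (intro mult_right_mono) auto
      finally show ?thesis .
    qed
    have ratio2: "(1-p) / (real n * p) * tb n p (Suc ks) \<le> tb n p ks"
      using ratio p0 n0 by (simp add: field_simps)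
    define c where "c = min 1 ((1-p) / (real n * p)) * (P / real r) / (real n + 1)"
    have Pr0: "0 \<le> P / real r" using P0 r0 by simp
    have c1: "c \<le> 1 / (real n + 1)"
    proof -
      have "min 1 ((1-p) / (real n * p)) * (P / real r) \<le> 1 * 1"
        using PLle Pr0 by (intro mult_mono) auto
      then have "min 1 ((1-p) / (real n * p)) * (P / real r) / (real n + 1) \<le> 1 / (real n + 1)"
        by (intro divide_right_mono) auto
      then show ?thesis unfolding c_def .
    qed
    have c2: "c \<le> (1-p) / (real n * p) * ((P / real r) / (real n + 1))"
    proof -
      have "min 1 ((1-p) / (real n * p)) * (P / real r) \<le> (1-p) / (real n * p) * (P / real r)"
        using Pr0 by (intro mult_right_mono) auto
      then have "min 1 ((1-p) / (real n * p)) * (P / real r) / (real n + 1) \<le> (1-p) / (real n * p) * (P / real r) / (real n + 1)"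
        by (intro divide_right_mono) auto
      then show ?thesis unfolding c_def by (simp only: times_divide_eq_right)
    qed
    have c3: "c \<le> (1-p) / (real n * p) * (1 / (real n + 1))"
    proof -
      have "(1-p) / (real n * p) * ((P / real r) / (real n + 1)) \<le> (1-p) / (real n * p) * (1 / (real n + 1))"
        using PLle p0 p1 n0 by (intro mult_left_mono divide_right_mono) auto
      then show ?thesis using c2 by linarith
    qed
    have tbks: "c \<le> tb n p ks"
    proof (cases "real (Suc ks) / real n < p")
      case True
      then have "KL (real (Suc ks) / real n) p < L" using notgood by (auto simp: good_def)
      then have gb: "P / real r < gg n p (Suc ks)"
        using KLcmp[of "real (Suc ks) / real n"] gg_KL[OF n1 _ p0 p1, of "Suc ks"] ksn by (simp only: Suc_le_eq)
      have md: "1 / (real n + 1) \<le> tb n (real (Suc ks) / real n) (Suc ks)"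
        using tb_mode_self[OF n1, of "Suc ks"] ksn by simp
      have "(P / real r) * (1 / (real n + 1)) \<le> gg n p (Suc ks) * tb n (real (Suc ks) / real n) (Suc ks)"
        using gb md Pr0 by (intro mult_mono) auto
      also have "\<dots> = tb n p (Suc ks)" using tb_gg[OF n1, of "Suc ks" p] ksn by simp
      finally have "(P / real r) / (real n + 1) \<le> tb n p (Suc ks)" by simp
      then have "(1-p) / (real n * p) * ((P / real r) / (real n + 1)) \<le> (1-p) / (real n * p) * tb n p (Suc ks)"
        using p0 p1 n0 by (intro mult_left_mono) auto
      then show ?thesis using c2 ratio2 by linarith
    next
      case False
      then have np: "real n * p \<le> real ks + 1" using n0 by (simp add: field_simps)
      show ?thesis
      proof (cases "(real n + 1) * p \<le> real ks + 1")
        case True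
        have "1 / (real n + 1) \<le> tb n p ks"
        proof (rule tb_mode)
          show "0 \<le> p" "p \<le> 1" "ks \<le> n" using p0 p1 ksn by auto
          fix j
          show "j < ks \<Longrightarrow> (real j + 1) * (1 - p) \<le> real (n - j) * p"
            using ksp ksn p0 by (subst cond_up_iff) (auto simp: algebra_simps)
          show "ks \<le> j \<Longrightarrow> j < n \<Longrightarrow> real (n - j) * p \<le> (real j + 1) * (1 - p)"
            using True by (subst cond_dn_iff) auto
        qed
        then show ?thesis using c1 by linarith
      next
        case False
        have "1 / (real n + 1) \<le> tb n p (Suc ks)"
        proof (rule tb_mode)
          show "0 \<le> p" "p \<le> 1" "Suc ks \<le> n" using p0 p1 ksn by auto
          fix j
          show "j < Suc ks \<Longrightarrow> (real j + 1) * (1 - p) \<le> real (n - j) * p"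
            using False ksn by (subst cond_up_iff) auto
          show "Suc ks \<le> j \<Longrightarrow> j < n \<Longrightarrow> real (n - j) * p \<le> (real j + 1) * (1 - p)"
            using np p1 by (subst cond_dn_iff) (auto simp: algebra_simps)
        qed
        then have "(1-p) / (real n * p) * (1 / (real n + 1)) \<le> (1-p) / (real n * p) * tb n p (Suc ks)"
          using p0 p1 n0 by (intro mult_left_mono) auto
        then show ?thesis using c3 ratio2 by linarith
      qed
    qed
    have rc: "2 / \<delta> \<le> real r * tb n p ks"
    proof -
      have "real r * c = min 1 ((1-p) / (real n * p)) * P / (real n + 1)"
        using r0 by (simp add: c_def)
      also have "\<dots> = (2 / \<delta>) * (real n + 1)^3 * (M * min 1 ((1-p) / (real n * p)))"
      proof -
        define m where "m = min 1 ((1-p) / (real n * p))"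
        have e4: "(real n + 1)^4 = (real n + 1) * (real n + 1)^3" by (simp add: eval_nat_numeral)
        have "m * ((2 / \<delta>) * ((real n + 1) * (real n + 1)^3) * M) / (real n + 1) = (2 / \<delta>) * (real n + 1)^3 * (M * m)"
        proof -
          have "m * ((2 / \<delta>) * ((real n + 1) * (real n + 1)^3) * M) = ((2 / \<delta>) * (real n + 1)^3 * (M * m)) * (real n + 1)"
            by (simp only: ac_simps)
          moreover have "real n + 1 \<noteq> 0" using n0 by simp
          ultimately show ?thesis by simp
        qed
        then show ?thesis unfolding Peq e4 m_def .
      qed
      also have "\<dots> \<ge> (2 / \<delta>) * (real n + 1)^3 * (1 / real n)"
        using Mmin d0 by (intro mult_left_mono) auto
      finally have "(2 / \<delta>) * (real n + 1)^3 * (1 / real n) \<le> real r * c" .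
      moreover have "(2 / \<delta>) * 1 \<le> (2 / \<delta>) * ((real n + 1)^3 * (1 / real n))"
      proof (rule mult_left_mono)
        have "real n \<le> (real n + 1)^3"
        proof -
          have "real n \<le> real n + 1" by simp
          also have "\<dots> \<le> (real n + 1)^3" by (rule self_le_power) auto
          finally show ?thesis .
        qed
        then show "1 \<le> (real n + 1)^3 * (1 / real n)" using n0 by (simp add: field_simps)
      qed (use d0 in auto)
      moreover have "real r * c \<le> real r * tb n p ks" using tbks r0 by simp
      ultimately show ?thesis by (simp add: mult.assoc)
    qed
    have lowbad: "measure_pmf.prob (Ys n p r) {Y. \<forall>i\<in>{1..r}. ks < Y i} \<le> \<delta> / 2"
      using prob_all_gt[of p n r ks] p0 p1 exp_bound[OF d0 rc] by simp
    define A where "A = {k. U < KL (real k / real n) p}"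
    have upbad: "measure_pmf.prob (Ys n p r) {Y. \<exists>i\<in>{1..r}. Y i \<in> A} \<le> \<delta> / 2"
    proof -
      have tm: "tb n p k \<le> 1 / (real r * P)" if k: "k \<in> A \<inter> {..n}" for k
      proof -
        have kn: "k \<le> n" using k by simp
        have gk: "gg n p k = 2 powr (- real n * KL (real k / real n) p)"
          using gg_KL[OF n1 kn p0 p1] by simp
        have "tb n p k = gg n p k * tb n (real k / real n) k" by (rule tb_gg[OF n1 kn])
        also have "\<dots> \<le> gg n p k * 1"
          using tb_le1[of "real k / real n" k n] kn n0 gk by (intro mult_left_mono) auto
        also have "\<dots> < 1 / (real r * P)" using KLcmpU k gk by (simp add: A_def)
        finally show ?thesis by simp
      qed
      have "measure_pmf.prob (Ys n p r) {Y. \<exists>i\<in>{1..r}. Y i \<in> A} \<le> real r * measure_pmf.prob (binomial_pmf n p) A"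
        using prob_ex_in p0 p1 by simp
      also have "measure_pmf.prob (binomial_pmf n p) A = (\<Sum>k\<in>A \<inter> {..n}. tb n p k)"
        by (rule prob_bin_sum[OF p0 p1])
      also have "\<dots> \<le> real (card (A \<inter> {..n})) * (1 / (real r * P))"
        by (rule sum_bounded_above) (rule tm)
      also have "\<dots> \<le> (real n + 1) * (1 / (real r * P))"
      proof (rule mult_right_mono)
        have "card (A \<inter> {..n}) \<le> card {..n}" by (rule card_mono) auto
        then show "real (card (A \<inter> {..n})) \<le> real n + 1" by simp
      qed (use r0 P0 in simp)
      finally have "measure_pmf.prob (Ys n p r) {Y. \<exists>i\<in>{1..r}. Y i \<in> A} \<le> real r * ((real n + 1) * (1 / (real r * P)))"
        using r0 by (simp add: mult_left_mono)
      also have "\<dots> = (real n + 1) / P" using r0 by simp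
      also have "\<dots> \<le> \<delta> / 2"
      proof -
        have "(2 / \<delta>) * (real n + 1) \<le> P"
        proof -
          have "real n + 1 \<le> (real n + 1)^4" by (rule self_le_power) auto
          also have "\<dots> \<le> (real n + 1)^4 * M" using M1 by simp
          finally have "(2 / \<delta>) * (real n + 1) \<le> (2 / \<delta>) * ((real n + 1)^4 * M)"
            using d0 by (intro mult_left_mono) auto
          then show ?thesis using Peq by (simp add: mult.assoc)
        qed
        then show ?thesis using P0 d0 n0 by (simp add: field_simps)
      qed
      finally show ?thesis .
    qed
    show "measure_pmf.prob (Ys n p r) {Y. Zmin n r Y < p \<and> L \<le> KL (Zmin n r Y) p \<and> KL (Zmin n r Y) p \<le> U} \<ge> 1 - \<delta>"
    proof -
      let ?S1 = "{Y. \<forall>i\<in>{1..r}. ks < Y i}"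
      let ?S2 = "{Y. \<exists>i\<in>{1..r}. Y i \<in> A}"
      have "measure_pmf.prob (Ys n p r) {Y. Zmin n r Y < p \<and> L \<le> KL (Zmin n r Y) p \<and> KL (Zmin n r Y) p \<le> U}
            \<ge> 1 - measure_pmf.prob (Ys n p r) (?S1 \<union> ?S2)"
      proof (rule compl_bound, rule subsetI)
        fix Y :: "nat \<Rightarrow> nat"
        assume Yb: "Y \<in> UNIV - {Y. Zmin n r Y < p \<and> L \<le> KL (Zmin n r Y) p \<and> KL (Zmin n r Y) p \<le> U}"
        show "Y \<in> ?S1 \<union> ?S2"
        proof (rule ccontr)
          assume "Y \<notin> ?S1 \<union> ?S2"
          then obtain i0 where i0: "i0 \<in> {1..r}" "Y i0 \<le> ks" and allU: "\<forall>i\<in>{1..r}. Y i \<notin> A"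
            by (auto simp: not_less)
          obtain j where j: "j \<in> {1..r}" "Zmin n r Y = real (Y j) / real n"
            using Zmin_attained[OF r1] by blast
          have "real (Y j) / real n \<le> real (Y i0) / real n" using Zmin_le[OF i0(1), of n Y] j by simp
          also have "\<dots> \<le> real ks / real n" using i0 n0 by (simp add: divide_right_mono)
          finally have "Y j \<le> ks" using n0 by (simp add: divide_le_cancel)
          then have "good (Y j)" using Qks by simp
          moreover have "\<not> U < KL (real (Y j) / real n) p" using allU j(1) by (simp add: A_def)
          ultimately have "Zmin n r Y < p \<and> L \<le> KL (Zmin n r Y) p \<and> KL (Zmin n r Y) p \<le> U"
            using j(2) by (simp add: good_def)
          then show False using Yb by simp
        qed
      qed
      moreover have "measure_pmf.prob (Ys n p r) (?S1 \<union> ?S2) \<le> measure_pmf.prob (Ys n p r) ?S1 + measure_pmf.prob (Ys n p r) ?S2"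
        by (rule measure_Un_le) auto
      ultimately show ?thesis using lowbad upbad by simp
    qed
  qed
qed

end
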